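(* Fix $H\in(\tfrac12,1)$, $\sigma>0$ and a continuous function $a:[0,1]\to\mathbb{R}$, and let $\mathcal{A}_n^{(N,H)}$, $\mathcal{A}^{(N,H)}$ be the sets of arbitrage points defined in the context. For all integers $k\geq 2$ and every $x\in\{-1,1\}^{k-1}$ there exist integers $n_k(x)\geq 1$ and $N_k(x)\geq k+n_k(x)$ such that for all $N\geq N_k(x)$: $$\left(x,1_{n_k(x)}\right)\in\mathcal{A}_{k+n_k(x)}^{(N,H)}\quad\text{and}\quad\left(x,-1_{n_k(x)}\right)\in\mathcal{A}_{k+n_k(x)}^{(N,H)},$$ where $1_m=(1,\dots,1)\in\mathbb{R}^m$ and $-1_m=(-1,\dots,-1)\in\mathbb{R}^m$. In particular $\lim_{N\to\infty}|\mathcal{A}^{(N,H)}|=\infty$.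
   Context: Let $c_H=\sqrt{\frac{2H\,\Gamma(\frac32-H)}{\Gamma(H+\frac12)\Gamma(2-2H)}}$, $C_H=c_H(H-\frac12)$ and $k_H(t,s)=C_H\, s^{\frac12-H}\int_s^t u^{H-\frac12}(u-s)^{H-\frac32}\,du$. For integers $N>1$, $1\le i<n\le N$, set $J_n^{(N,H)}(i)=\sigma\sqrt N\int_{(i-1)/N}^{i/N}\big(k_H(\tfrac nN,u)-k_H(\tfrac{n-1}N,u)\big)du$, and for $1\le n\le N$ set $g_n^{(N,H)}=\sigma\sqrt N\int_{(n-1)/N}^{n/N}k_H(\tfrac nN,u)\,du$ and $a_n^{(N)}=\frac1N a(n/N)$. For $x=(x_1,\dots,x_{n-1})\in\{-1,1\}^{n-1}$ let $Y_n^{(N,H)}(x)=\sum_{i=1}^{n-1}J_n^{(N,H)}(i)x_i$ (with $Y_1^{(N,H)}=0$), $u_n^{(N)}(x)=Y_n^{(N,H)}(x)+g_n^{(N,H)}$, $d_n^{(N)}(x)=Y_n^{(N,H)}(x)-g_n^{(N,H)}$. The $N$-binary tree is $\mathbb{X}_N=\{\tau\}\cup\bigcup_{n=1}^{N-1}\{-1,1\}^n$ ($\tau$ the root, identified with the empty sequence). The set of arbitrage points at level $n\ge2$ is $\mathcal{A}_n^{(N,H)}=\{x\in\{-1,1\}^{n-1}: u_n^{(N)}(x)\le -a_n^{(N)}\text{ or } d_n^{(N)}(x)\ge -a_n^{(N)}\}$; $\mathcal{A}_1^{(N,H)}=\{\tau\}$ if $u_1^{(N)}\le -a_1^{(N)}$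 or $d_1^{(N)}\ge -a_1^{(N)}$, and $\emptyset$ otherwise. The set of arbitrage points is $\mathcal{A}^{(N,H)}=\bigcup_{n=1}^N\mathcal{A}_n^{(N,H)}\subseteq\mathbb{X}_N$. *)

theory Defs
  imports "HOL-Analysis.Analysis"
begin

definition cH :: "real \<Rightarrow> real" where
  "cH H = sqrt (2 * H * Gamma (3/2 - H) / (Gamma (H + 1/2) * Gamma (2 - 2 * H)))"

definition CH :: "real \<Rightarrow> real" where
  "CH H = cH H * (H - 1/2)"

definition kH :: "real \<Rightarrow> real \<Rightarrow> real \<Rightarrow> real" where
  "kH H t s = CH H * s powr (1/2 - H) *
     integral {s..t} (\<lambda>u. u powr (H - 1/2) * (u - s) powr (H - 3/2))"

definition Jn :: "real \<Rightarrow> real \<Rightarrow> nat \<Rightarrow> nat \<Rightarrow> nat \<Rightarrow> real" where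
  "Jn \<sigma> H N n i = \<sigma> * sqrt (real N) *
     integral {(real i - 1) / real N .. real i / real N}
       (\<lambda>u. kH H (real n / real N) u - kH H ((real n - 1) / real N) u)"

definition gn :: "real \<Rightarrow> real \<Rightarrow> nat \<Rightarrow> nat \<Rightarrow> real" where
  "gn \<sigma> H N n = \<sigma> * sqrt (real N) *
     integral {(real n - 1) / real N .. real n / real N} (\<lambda>u. kH H (real n / real N) u)"

definition an :: "(real \<Rightarrow> real) \<Rightarrow> nat \<Rightarrow> nat \<Rightarrow> real" where
  "an a N n = a (real n / real N) / real N"

text \<open>Points of the binary tree are lists; x_i is x ! (i-1).\<close>
definition Yn :: "real \<Rightarrow> real \<Rightarrow> nat \<Rightarrow> nat \<Rightarrow> real list \<Rightarrow> real" where
  "Yn \<sigma> H N n x = (\<Sum>i = 1..n - 1. Jn \<sigma> H N n i * x ! (i - 1))"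

definition un :: "real \<Rightarrow> real \<Rightarrow> nat \<Rightarrow> nat \<Rightarrow> real list \<Rightarrow> real" where
  "un \<sigma> H N n x = Yn \<sigma> H N n x + gn \<sigma> H N n"

definition dn :: "real \<Rightarrow> real \<Rightarrow> nat \<Rightarrow> nat \<Rightarrow> real list \<Rightarrow> real" where
  "dn \<sigma> H N n x = Yn \<sigma> H N n x - gn \<sigma> H N n"

definition pm_seqs :: "nat \<Rightarrow> real list set" where
  "pm_seqs m = {x. length x = m \<and> set x \<subseteq> {-1, 1}}"

text \<open>Arbitrage points at level n (n >= 1); level 1 gives {[]} (the root) or {}.\<close>
definition arb_level :: "real \<Rightarrow> real \<Rightarrow> (real \<Rightarrow> real) \<Rightarrow> nat \<Rightarrow> nat \<Rightarrow> real list set" where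
  "arb_level \<sigma> H a N n = {x \<in> pm_seqs (n - 1).
       un \<sigma> H N n x \<le> - an a N n \<or> dn \<sigma> H N n x \<ge> - an a N n}"

definition arb_set :: "real \<Rightarrow> real \<Rightarrow> (real \<Rightarrow> real) \<Rightarrow> nat \<Rightarrow> real list set" where
  "arb_set \<sigma> H a N = (\<Union>n\<in>{1..N}. arb_level \<sigma> H a N n)"

end

theory Submission
  imports Defs
begin

lemma CH_pos: assumes "1/2 < H" "H < 1" shows "CH H > 0"
proof -
  have "Gamma (3/2 - H) > 0" "Gamma (H + 1/2) > 0" "Gamma (2 - 2*H) > 0"
    using assms by (auto intro!: Gamma_real_pos)
  hence "cH H > 0" unfolding cH_def using assms by (auto intro!: divide_pos_pos mult_pos_pos)
  thus ?thesis unfolding CH_def using assms by simp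
qed

lemma integral_nonneg':
  fixes f :: "real \<Rightarrow> real"
  assumes "\<And>x. x \<in> S \<Longrightarrow> 0 \<le> f x" shows "0 \<le> integral S f"
  by (cases "f integrable_on S") (auto intro!: integral_nonneg assms simp: not_integrable_integral)

lemma integral_le':
  fixes f g :: "real \<Rightarrow> real"
  assumes "\<And>x. x \<in> S \<Longrightarrow> 0 \<le> f x" "\<And>x. x \<in> S \<Longrightarrow> f x \<le> g x" "g integrable_on S"
  shows "integral S f \<le> integral S g"
proof (cases "f integrable_on S")
  case True thus ?thesis using assms by (intro integral_le) auto
next
  case False
  have "0 \<le> integral S g" using assms by (intro integral_nonneg) (auto intro: order_trans)
  thus ?thesis using False by (simp add: not_integrable_integral)
qed

lemma int_scale:
  fixes f :: "real \<Rightarrow> real"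
  assumes "N > 0"
  shows "integral {a/N..b/N} f = integral {a..b} (\<lambda>v. f (v/N)) / N"
proof -
  have "integral ((\<lambda>x. x / N) ` {a..b}) (\<lambda>x. (\<lambda>v. f (v/N)) (N * x)) = (1 / \<bar>N\<bar>) *\<^sub>R integral {a..b} (\<lambda>v. f (v/N))"
    using assms by (intro integral_stretch_real) auto
  moreover have "(\<lambda>x. x / N) ` {a..b} = {a/N..b/N}" using assms by simp
  ultimately show ?thesis using assms by simp
qed

lemma kH_scale:
  assumes N: "N > 0" and s: "s \<ge> 0"
  shows "kH H (t/N) (s/N) = N powr (1/2 - H) * kH H t s"
proof -
  let ?f = "\<lambda>u. u powr (H - 1/2) * (u - s/N) powr (H - 3/2)"
  have "integral {s/N..t/N} ?f = integral {s..t} (\<lambda>v. ?f (v/N)) / N"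
    using N by (rule int_scale)
  also have "integral {s..t} (\<lambda>v. ?f (v/N)) =
      integral {s..t} (\<lambda>v. N powr (-(H - 1/2) - (H - 3/2)) * (v powr (H - 1/2) * (v - s) powr (H - 3/2)))"
  proof (rule integral_cong)
    fix v assume "v \<in> {s..t}"
    hence v: "v \<ge> 0" "v - s \<ge> 0" using s by auto
    have "?f (v/N) = (v powr (H - 1/2) / N powr (H - 1/2)) * ((v - s) powr (H - 3/2) / N powr (H - 3/2))"
      using v N by (simp add: powr_divide diff_divide_distrib[symmetric])
    also have "\<dots> = N powr (-(H - 1/2) - (H - 3/2)) * (v powr (H - 1/2) * (v - s) powr (H - 3/2))"
    proof -
      have "N powr (-(H - 1/2) - (H - 3/2)) = inverse (N powr (H - 1/2) * N powr (H - 3/2))"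
        using N by (simp add: powr_add[symmetric] powr_minus[symmetric])
      thus ?thesis using N by (simp add: field_simps)
    qed
    finally show "?f (v/N) = \<dots>" .
  qed
  also have "\<dots> = N powr (-(H - 1/2) - (H - 3/2)) * integral {s..t} (\<lambda>v. v powr (H - 1/2) * (v - s) powr (H - 3/2))"
    by simp
  finally have I: "integral {s/N..t/N} ?f = N powr (-(H - 1/2) - (H - 3/2)) * integral {s..t} (\<lambda>v. v powr (H - 1/2) * (v - s) powr (H - 3/2)) / N" .
  have S: "(s/N) powr (1/2 - H) = s powr (1/2 - H) / N powr (1/2 - H)"
    using s N by (simp add: powr_divide)
  have E: "N powr (-(H - 1/2) - (H - 3/2)) / N / N powr (1/2 - H) = N powr (1/2 - H)"
  proof -
    have "N powr (-(H - 1/2) - (H - 3/2) - 1 - (1/2 - H)) = N powr (-(H - 1/2) - (H - 3/2)) / N / N powr (1/2 - H)"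
      using N by (simp only: powr_diff powr_one)
    hence "N powr (-(H - 1/2) - (H - 3/2)) / N / N powr (1/2 - H) = N powr (-(H - 1/2) - (H - 3/2) - 1 - (1/2 - H))"
      by simp
    also have "-(H - 1/2) - (H - 3/2) - 1 - (1/2 - H) = 1/2 - H" by simp
    finally show ?thesis .
  qed
  define p where "p = N powr (1/2 - H)"
  define q where "q = N powr (-(H - 1/2) - (H - 3/2))"
  have p: "p > 0" using N by (simp add: p_def)
  have E': "q = p * N * p" using E p N unfolding p_def[symmetric] q_def[symmetric] by (simp add: field_simps)
  show ?thesis unfolding kH_def I S p_def[symmetric] q_def[symmetric] E'
    using p N by (simp add: field_simps)
qed

lemma pow_comb:
  assumes N: "N > (0::real)"
  shows "sqrt N * (N powr (1/2 - H) * X) / N = N powr (-H) * X"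
proof -
  have "sqrt N = N powr (1/2)" using N by (simp add: powr_half_sqrt)
  moreover have "N powr (1/2) * N powr (1/2 - H) / N = N powr (-H)"
  proof -
    have "N powr (1/2) * N powr (1/2 - H) / N = N powr (1/2 + (1/2 - H) - 1)"
      using N by (simp only: powr_diff powr_add powr_one)
    thus ?thesis by simp
  qed
  ultimately show ?thesis by (metis (no_types, lifting) mult.assoc times_divide_eq_left mult.commute)
qed

lemma pow_comb':
  assumes N: "N > (0::real)"
  shows "s * sqrt N * (N powr (1/2 - H) * X / N) = s * N powr (-H) * X"
  using pow_comb[OF N, of H X] by (metis (no_types, lifting) mult.assoc times_divide_eq_right)

lemma Jn_scale:
  assumes N: "N > 0" and i: "i \<ge> 1"
  shows "Jn \<sigma> H N n i = \<sigma> * real N powr (-H) *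
     integral {real i - 1..real i} (\<lambda>v. kH H (real n) v - kH H (real n - 1) v)"
proof -
  have N': "real N > 0" using N by simp
  have "integral {(real i - 1) / real N .. real i / real N}
       (\<lambda>u. kH H (real n / real N) u - kH H ((real n - 1) / real N) u)
     = integral {real i - 1..real i} (\<lambda>v. kH H (real n / real N) (v / real N) - kH H ((real n - 1) / real N) (v / real N)) / real N"
    using N' by (rule int_scale)
  also have "integral {real i - 1..real i} (\<lambda>v. kH H (real n / real N) (v / real N) - kH H ((real n - 1) / real N) (v / real N))
     = integral {real i - 1..real i} (\<lambda>v. real N powr (1/2 - H) * (kH H (real n) v - kH H (real n - 1) v))"
  proof (rule integral_cong)
    fix v assume "v \<in> {real i - 1..real i}"
    hence "v \<ge> 0" using i by auto
    thus "kH H (real n / real N) (v / real N) - kH H ((real n - 1) / real N) (v / real N) = real N powr (1/2 - H) * (kH H (real n) v - kH H (real n - 1) v)"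
      using N' by (simp add: kH_scale right_diff_distrib)
  qed
  also have "\<dots> = real N powr (1/2 - H) * integral {real i - 1..real i} (\<lambda>v. kH H (real n) v - kH H (real n - 1) v)"
    by simp
  finally have eq: "integral {(real i - 1) / real N .. real i / real N} (\<lambda>u. kH H (real n / real N) u - kH H ((real n - 1) / real N) u) = real N powr (1/2 - H) * integral {real i - 1..real i} (\<lambda>v. kH H (real n) v - kH H (real n - 1) v) / real N" .
  show ?thesis unfolding Jn_def eq by (rule pow_comb'[OF N'])
qed

lemma gn_scale:
  assumes N: "N > 0" and n: "n \<ge> 1"
  shows "gn \<sigma> H N n = \<sigma> * real N powr (-H) * integral {real n - 1..real n} (\<lambda>v. kH H (real n) v)"
proof -
  have N': "real N > 0" using N by simp
  have "integral {(real n - 1) / real N .. real n / real N} (\<lambda>u. kH H (real n / real N) u)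
     = integral {real n - 1..real n} (\<lambda>v. kH H (real n / real N) (v / real N)) / real N"
    using N' by (rule int_scale)
  also have "integral {real n - 1..real n} (\<lambda>v. kH H (real n / real N) (v / real N))
     = integral {real n - 1..real n} (\<lambda>v. real N powr (1/2 - H) * kH H (real n) v)"
  proof (rule integral_cong)
    fix v assume "v \<in> {real n - 1..real n}"
    hence "v \<ge> 0" using n by auto
    thus "kH H (real n / real N) (v / real N) = real N powr (1/2 - H) * kH H (real n) v"
      using N' by (simp add: kH_scale)
  qed
  also have "\<dots> = real N powr (1/2 - H) * integral {real n - 1..real n} (\<lambda>v. kH H (real n) v)"
    by simp
  finally have eq: "integral {(real n - 1) / real N .. real n / real N} (\<lambda>u. kH H (real n / real N) u) = real N powr (1/2 - H) * integral {real n - 1..real n} (\<lambda>v. kH H (real n) v) / real N" .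
  show ?thesis unfolding gn_def eq by (rule pow_comb'[OF N'])
qed

lemma powint_shift:
  fixes s t b :: real
  assumes "0 \<le> s" "s \<le> t" "b > -1"
  shows "((\<lambda>u. (u - s) powr b) has_integral ((t - s) powr (b + 1) / (b + 1))) {s..t}"
proof -
  have "((\<lambda>x. x powr b) has_integral ((t - s) powr (b + 1) / (b + 1))) {0..t-s}"
    using assms by (intro has_integral_powr_from_0) auto
  moreover have "((\<lambda>u. (u - s) powr b) \<circ> (+) s) = (\<lambda>x. x powr b)" by (auto simp: o_def)
  ultimately have "(((\<lambda>u. (u - s) powr b) \<circ> (+) s) has_integral ((t - s) powr (b + 1) / (b + 1))) {0..t-s}"
    by simp
  hence "((\<lambda>u. (u - s) powr b) has_integral ((t - s) powr (b + 1) / (b + 1))) {0+s..t-s+s}"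
    by (subst (asm) has_integral_shift_Icc_real)
  thus ?thesis by simp
qed

lemma F_int:
  fixes H s t :: real
  assumes H: "1/2 < H" "H < 1" and s: "0 < s" "s \<le> t"
  shows "(\<lambda>u. u powr (H - 1/2) * (u - s) powr (H - 3/2)) integrable_on {s..t}"
proof -
  have g: "(\<lambda>u. (u - s) powr (H - 3/2)) integrable_on {s..t}"
    using powint_shift[of s t "H - 3/2"] s H by (auto simp: integrable_on_def)
  hence ga: "(\<lambda>u. (u - s) powr (H - 3/2)) absolutely_integrable_on {s..t}"
    by (intro nonnegative_absolutely_integrable_1) auto
  have c: "continuous_on {s..t} (\<lambda>u. u powr (H - 1/2))"
    using s by (intro continuous_intros) auto
  have "(\<lambda>u. u powr (H - 1/2) * (u - s) powr (H - 3/2)) absolutely_integrable_on {s..t}"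
  proof (rule absolutely_integrable_bounded_measurable_product_real)
    show "(\<lambda>u. u powr (H - 1/2)) \<in> borel_measurable (lebesgue_on {s..t})"
      using c by (intro continuous_imp_measurable_on_sets_lebesgue) auto
    show "bounded ((\<lambda>u. u powr (H - 1/2)) ` {s..t})"
      using c by (intro compact_imp_bounded compact_continuous_image) auto
  qed (use ga in auto)
  thus ?thesis using absolutely_integrable_on_def by blast
qed

lemma I_upper:
  fixes H s t :: real
  assumes H: "1/2 < H" "H < 1" and s: "0 \<le> s" "s \<le> t"
  shows "integral {s..t} (\<lambda>u. u powr (H - 1/2) * (u - s) powr (H - 3/2))
           \<le> t powr (H - 1/2) * ((t - s) powr (H - 1/2) / (H - 1/2))"
proof -
  have hi: "((\<lambda>u. (u - s) powr (H - 3/2)) has_integral ((t - s) powr (H - 1/2) / (H - 1/2))) {s..t}"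
    using powint_shift[of s t "H - 3/2"] s H by auto
  have hi2: "((\<lambda>u. t powr (H - 1/2) * (u - s) powr (H - 3/2)) has_integral (t powr (H - 1/2) * ((t - s) powr (H - 1/2) / (H - 1/2)))) {s..t}"
    using has_integral_mult_right[OF hi] by simp
  have "integral {s..t} (\<lambda>u. u powr (H - 1/2) * (u - s) powr (H - 3/2))
        \<le> integral {s..t} (\<lambda>u. t powr (H - 1/2) * (u - s) powr (H - 3/2))"
  proof (rule integral_le')
    fix u assume u: "u \<in> {s..t}"
    show "0 \<le> u powr (H - 1/2) * (u - s) powr (H - 3/2)" by simp
    have "u powr (H - 1/2) \<le> t powr (H - 1/2)" using u s H by (intro powr_mono2) auto
    thus "u powr (H - 1/2) * (u - s) powr (H - 3/2) \<le> t powr (H - 1/2) * (u - s) powr (H - 3/2)"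
      by (intro mult_right_mono) auto
  qed (use hi2 in \<open>auto simp: integrable_on_def\<close>)
  also have "\<dots> = t powr (H - 1/2) * ((t - s) powr (H - 1/2) / (H - 1/2))"
    using hi2 by (rule integral_unique)
  finally show ?thesis .
qed

lemma kH_nonneg:
  fixes H t s :: real
  assumes H: "1/2 < H" "H < 1"
  shows "0 \<le> kH H t s"
  unfolding kH_def using CH_pos[OF H]
  by (intro mult_nonneg_nonneg integral_nonneg') auto

lemma kH_upper:
  fixes H s t :: real
  assumes H: "1/2 < H" "H < 1" and s: "0 \<le> s" "s \<le> t"
  shows "kH H t s \<le> CH H * s powr (1/2 - H) * (t powr (H - 1/2) * ((t - s) powr (H - 1/2) / (H - 1/2)))"
  unfolding kH_def using CH_pos[OF H] I_upper[OF H s]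
  by (intro mult_left_mono) auto

lemma D_repr:
  fixes H v t :: real
  assumes H: "1/2 < H" "H < 1" and v: "0 < v" "v \<le> t - 1"
  shows "kH H t v - kH H (t - 1) v = CH H * v powr (1/2 - H) *
           integral {t - 1..t} (\<lambda>u. u powr (H - 1/2) * (u - v) powr (H - 3/2))"
proof -
  have "integral {v..t - 1} (\<lambda>u. u powr (H - 1/2) * (u - v) powr (H - 3/2)) +
        integral {t - 1..t} (\<lambda>u. u powr (H - 1/2) * (u - v) powr (H - 3/2)) =
        integral {v..t} (\<lambda>u. u powr (H - 1/2) * (u - v) powr (H - 3/2))"
    using v by (intro Henstock_Kurzweil_Integration.integral_combine F_int H) auto
  note eq = this
  show ?thesis unfolding kH_def eq[symmetric] by (simp add: algebra_simps)
qed

lemma head_const: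
  fixes H n k :: real
  assumes H: "1/2 < H" "H < 1" and k: "k \<ge> 2" "2 * k \<le> n"
  shows "n powr (H - 1/2) * (n - k) powr (H - 3/2) \<le> 2"
proof -
  have n: "n > 0" "n \<ge> 1" using k by auto
  have "(n - k) powr (H - 3/2) \<le> (n/2) powr (H - 3/2)"
    using H k by (intro powr_mono2') auto
  also have "\<dots> = n powr (H - 3/2) / 2 powr (H - 3/2)" using n by (simp add: powr_divide)
  finally have 1: "n powr (H - 1/2) * (n - k) powr (H - 3/2) \<le> n powr (H - 1/2) * (n powr (H - 3/2) / 2 powr (H - 3/2))"
    by (intro mult_left_mono) auto
  have 2: "n powr (H - 1/2) * n powr (H - 3/2) \<le> 1"
  proof -
    have "n powr (H - 1/2) * n powr (H - 3/2) = n powr ((H - 1/2) + (H - 3/2))" by (simp only: powr_add)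
    also have "\<dots> \<le> n powr 0" using H n by (intro powr_mono) auto
    finally show ?thesis using n by simp
  qed
  have 3: "1 / 2 powr (H - 3/2) \<le> 2"
  proof -
    have "1 / 2 powr (H - 3/2) = 2 powr (-(H - 3/2))" by (rule powr_minus_divide[symmetric])
    also have "\<dots> \<le> 2 powr 1" using H by (intro powr_mono) auto
    finally show ?thesis by simp
  qed
  have "n powr (H - 1/2) * (n powr (H - 3/2) / 2 powr (H - 3/2)) = (n powr (H - 1/2) * n powr (H - 3/2)) * (1 / 2 powr (H - 3/2))"
    by simp
  also have "\<dots> \<le> 1 * 2" using 2 3 by (intro mult_mono) auto
  finally show ?thesis using 1 by simp
qed



lemma kH_at0: "kH H t 0 = 0" unfolding kH_def by simp

lemma jj_nonneg:
  fixes H :: real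
  assumes H: "1/2 < H" "H < 1" and i: "1 \<le> i" "i \<le> n - 1"
  shows "0 \<le> integral {real i - 1..real i} (\<lambda>v. kH H (real n) v - kH H (real n - 1) v)"
proof (rule integral_nonneg')
  fix v assume v: "v \<in> {real i - 1..real i}"
  have vn: "v \<le> real n - 1" using v i by auto
  show "0 \<le> kH H (real n) v - kH H (real n - 1) v"
  proof (cases "v = 0")
    case True thus ?thesis by (simp add: kH_at0)
  next
    case False
    hence "v > 0" using v i by auto
    thus ?thesis using D_repr[OF H \<open>v > 0\<close> vn] CH_pos[OF H]
      by (auto intro!: mult_nonneg_nonneg integral_nonneg')
  qed
qed

lemma jj_head:
  fixes H :: real
  assumes H: "1/2 < H" "H < 1" and k: "2 \<le> k" "2 * k \<le> n" and i: "1 \<le> i" "i \<le> k - 1"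
  shows "integral {real i - 1..real i} (\<lambda>v. kH H (real n) v - kH H (real n - 1) v)
     \<le> integral {real i - 1..real i} (\<lambda>v. 2 * CH H * v powr (1/2 - H))"
proof (rule integral_le')
  have "(\<lambda>v. v powr (1/2 - H)) integrable_on {0..real i}"
    using H by (intro integrable_on_powr_from_0) auto
  hence "(\<lambda>v. v powr (1/2 - H)) integrable_on {real i - 1..real i}"
    by (rule integrable_on_subinterval) (use i in auto)
  hence "(\<lambda>v. (2 * CH H) *\<^sub>R v powr (1/2 - H)) integrable_on {real i - 1..real i}"
    by (rule integrable_cmul)
  thus "(\<lambda>v. 2 * CH H * v powr (1/2 - H)) integrable_on {real i - 1..real i}"
    by simp
next
  fix v assume v: "v \<in> {real i - 1..real i}"
  have vn: "v \<le> real n - 1" using v i k by auto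
  have C: "CH H > 0" by (rule CH_pos[OF H])
  show "0 \<le> kH H (real n) v - kH H (real n - 1) v"
  proof (cases "v = 0")
    case True thus ?thesis by (simp add: kH_at0)
  next
    case False
    hence "v > 0" using v i by auto
    thus ?thesis using D_repr[OF H \<open>v > 0\<close> vn] C
      by (auto intro!: mult_nonneg_nonneg integral_nonneg')
  qed
  show "kH H (real n) v - kH H (real n - 1) v \<le> 2 * CH H * v powr (1/2 - H)"
  proof (cases "v = 0")
    case True thus ?thesis by (simp add: kH_at0)
  next
    case False
    hence v0: "v > 0" using v i by auto
    have "integral {real n - 1..real n} (\<lambda>u. u powr (H - 1/2) * (u - v) powr (H - 3/2))
        \<le> integral {real n - 1..real n} (\<lambda>u. real n powr (H - 1/2) * (real n - real k) powr (H - 3/2))"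
    proof (rule integral_le')
      fix u assume u: "u \<in> {real n - 1..real n}"
      have uv: "real n - real k \<le> u - v" using u v i k by auto
      have nk: "real n - real k > 0" using k by auto
      have "u powr (H - 1/2) \<le> real n powr (H - 1/2)" using u H k by (intro powr_mono2) auto
      moreover have "(u - v) powr (H - 3/2) \<le> (real n - real k) powr (H - 3/2)"
        using H uv nk by (intro powr_mono2') auto
      ultimately show "u powr (H - 1/2) * (u - v) powr (H - 3/2) \<le> real n powr (H - 1/2) * (real n - real k) powr (H - 3/2)"
        by (intro mult_mono) auto
    qed auto
    also have "\<dots> = real n powr (H - 1/2) * (real n - real k) powr (H - 3/2)" using k by simp
    also have "\<dots> \<le> 2" using head_const[OF H, of "real k" "real n"] k by auto
    finally have I: "integral {real n - 1..real n} (\<lambda>u. u powr (H - 1/2) * (u - v) powr (H - 3/2)) \<le> 2" .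
    have "kH H (real n) v - kH H (real n - 1) v = CH H * v powr (1/2 - H) * integral {real n - 1..real n} (\<lambda>u. u powr (H - 1/2) * (u - v) powr (H - 3/2))"
      by (rule D_repr[OF H v0 vn])
    also have "\<dots> \<le> CH H * v powr (1/2 - H) * 2" using I C by (intro mult_left_mono) auto
    finally show ?thesis by simp
  qed
qed

lemma gg_upper:
  fixes H :: real
  assumes H: "1/2 < H" "H < 1" and n: "2 \<le> n"
  shows "integral {real n - 1..real n} (\<lambda>v. kH H (real n) v) \<le> 2 * CH H / (H - 1/2)"
proof -
  have C: "CH H > 0" by (rule CH_pos[OF H])
  have "integral {real n - 1..real n} (\<lambda>v. kH H (real n) v) \<le> integral {real n - 1..real n} (\<lambda>v. 2 * CH H / (H - 1/2))"
  proof (rule integral_le')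
    fix v assume v: "v \<in> {real n - 1..real n}"
    have v0: "v > 0" "v \<ge> 1" using v n by auto
    show "0 \<le> kH H (real n) v" by (rule kH_nonneg[OF H])
    have "kH H (real n) v \<le> CH H * v powr (1/2 - H) * (real n powr (H - 1/2) * ((real n - v) powr (H - 1/2) / (H - 1/2)))"
      using v0 v by (intro kH_upper[OF H]) auto
    also have "\<dots> = CH H * (real n / v) powr (H - 1/2) * (real n - v) powr (H - 1/2) / (H - 1/2)"
    proof -
      have "v powr (1/2 - H) = 1 / v powr (H - 1/2)"
        using powr_minus_divide[of v "H - 1/2"] by simp
      moreover have "(real n / v) powr (H - 1/2) = real n powr (H - 1/2) / v powr (H - 1/2)"
        using v0 by (simp add: powr_divide)
      ultimately show ?thesis by simp
    qed
    also have "\<dots> \<le> CH H * 2 * 1 / (H - 1/2)"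
    proof -
      have "(real n / v) powr (H - 1/2) \<le> 2 powr (H - 1/2)"
        using v0 v n H by (intro powr_mono2) (auto simp: field_simps)
      also have "\<dots> \<le> 2 powr 1" using H by (intro powr_mono) auto
      finally have a: "(real n / v) powr (H - 1/2) \<le> 2" by simp
      have b: "(real n - v) powr (H - 1/2) \<le> 1" using v H by (intro powr_le1) auto
      have "CH H * (real n / v) powr (H - 1/2) * (real n - v) powr (H - 1/2) \<le> CH H * 2 * 1"
        using a b C by (intro mult_mono) auto
      thus ?thesis using H by (intro divide_right_mono) auto
    qed
    finally show "kH H (real n) v \<le> 2 * CH H / (H - 1/2)" by (simp add: mult.commute)
  qed auto
  also have "\<dots> = 2 * CH H / (H - 1/2)" using n by simp
  finally show ?thesis .
qed

lemma jj_tail: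
  fixes H :: real
  assumes H: "1/2 < H" "H < 1" and i: "2 \<le> i" "i + 2 \<le> n"
  shows "CH H * (real n - real i + 1) powr (H - 3/2)
     \<le> integral {real i - 1..real i} (\<lambda>v. kH H (real n) v - kH H (real n - 1) v)"
proof -
  have C: "CH H > 0" by (rule CH_pos[OF H])
  let ?F = "\<lambda>v u. u powr (H - 1/2) * (u - v) powr (H - 3/2)"
  have cF: "continuous_on ({real i - 1..real i} \<times> cbox (real n - 1) (real n)) (\<lambda>(x, t). ?F x t)"
  proof -
    have "continuous_on ({real i - 1..real i} \<times> cbox (real n - 1) (real n)) (\<lambda>p. snd p powr (H - 1/2) * (snd p - fst p) powr (H - 3/2))"
      using i by (intro continuous_intros) (auto simp: mem_Times_iff)
    thus ?thesis by (simp add: case_prod_beta)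
  qed
  have "continuous_on {real i - 1..real i} (\<lambda>v. integral (cbox (real n - 1) (real n)) (?F v))"
    by (rule integral_continuous_on_param[OF cF])
  hence cG: "continuous_on {real i - 1..real i} (\<lambda>v. CH H * v powr (1/2 - H) * integral {real n - 1..real n} (?F v))"
    using i by (intro continuous_intros) auto
  have Dint: "(\<lambda>v. kH H (real n) v - kH H (real n - 1) v) integrable_on {real i - 1..real i}"
  proof (rule integrable_eq)
    show "(\<lambda>v. CH H * v powr (1/2 - H) * integral {real n - 1..real n} (?F v)) integrable_on {real i - 1..real i}"
      using cG by (rule integrable_continuous_interval)
  next
    fix v assume v: "v \<in> {real i - 1..real i}"
    show "CH H * v powr (1/2 - H) * integral {real n - 1..real n} (?F v) = kH H (real n) v - kH H (real n - 1) v"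
      using v i by (intro D_repr[OF H, symmetric]) auto
  qed
  have "integral {real i - 1..real i} (\<lambda>v. CH H * (real n - real i + 1) powr (H - 3/2))
     \<le> integral {real i - 1..real i} (\<lambda>v. kH H (real n) v - kH H (real n - 1) v)"
  proof (rule integral_le[OF _ Dint])
    fix v assume v: "v \<in> {real i - 1..real i}"
    have v0: "v > 0" "v \<ge> 1" "v \<le> real n - 2" using v i by auto
    have "integral {real n - 1..real n} (\<lambda>u. (real n - 1) powr (H - 1/2) * (real n - v) powr (H - 3/2))
        \<le> integral {real n - 1..real n} (?F v)"
    proof (rule integral_le)
      show "?F v integrable_on {real n - 1..real n}"
        by (rule integrable_on_subinterval[OF F_int[OF H, of v "real n"]]) (use v0 in auto)
      fix u assume u: "u \<in> {real n - 1..real n}"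
      have "(real n - 1) powr (H - 1/2) \<le> u powr (H - 1/2)" using u H i by (intro powr_mono2) auto
      moreover have "(real n - v) powr (H - 3/2) \<le> (u - v) powr (H - 3/2)"
        using u v0 H by (intro powr_mono2') auto
      ultimately show "(real n - 1) powr (H - 1/2) * (real n - v) powr (H - 3/2) \<le> ?F v u"
        by (intro mult_mono) auto
    qed auto
    hence I: "(real n - 1) powr (H - 1/2) * (real n - v) powr (H - 3/2) \<le> integral {real n - 1..real n} (?F v)"
      using i by simp
    have P: "1 \<le> v powr (1/2 - H) * (real n - 1) powr (H - 1/2)"
    proof -
      have "v powr (1/2 - H) = 1 / v powr (H - 1/2)"
        using powr_minus_divide[of v "H - 1/2"] by simp
      moreover have "((real n - 1) / v) powr (H - 1/2) = (real n - 1) powr (H - 1/2) / v powr (H - 1/2)"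
        using v0 by (simp add: powr_divide)
      moreover have "1 \<le> ((real n - 1) / v) powr (H - 1/2)"
        using v0 H by (intro ge_one_powr_ge_zero) auto
      ultimately show ?thesis by simp
    qed
    have Q: "(real n - real i + 1) powr (H - 3/2) \<le> (real n - v) powr (H - 3/2)"
      using v v0 H by (intro powr_mono2') auto
    have "CH H * (real n - real i + 1) powr (H - 3/2) \<le> CH H * (1 * (real n - v) powr (H - 3/2))"
      using Q C by simp
    also have "\<dots> \<le> CH H * ((v powr (1/2 - H) * (real n - 1) powr (H - 1/2)) * (real n - v) powr (H - 3/2))"
      using P C by (intro mult_left_mono mult_right_mono) auto
    also have "\<dots> = CH H * v powr (1/2 - H) * ((real n - 1) powr (H - 1/2) * (real n - v) powr (H - 3/2))"
      by (simp add: mult_ac)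
    also have "\<dots> \<le> CH H * v powr (1/2 - H) * integral {real n - 1..real n} (?F v)"
      using I C by (intro mult_left_mono) auto
    also have "\<dots> = kH H (real n) v - kH H (real n - 1) v"
      using v0 by (intro D_repr[OF H, symmetric]) auto
    finally show "CH H * (real n - real i + 1) powr (H - 3/2) \<le> kH H (real n) v - kH H (real n - 1) v" .
  qed auto
  thus ?thesis using i by simp
qed

lemma tail_big:
  fixes H T :: real
  assumes H: "1/2 < H" "H < 1" and k: "2 \<le> k"
  shows "\<exists>nk\<ge>k. T \<le> (\<Sum>i\<in>{k..k+nk-2}. (real (k+nk) - real i + 1) powr (H - 3/2))"
proof -
  define nk where "nk = max (max 3 k) (nat \<lceil>(2 * \<bar>T\<bar> + 1) powr (1 / (H - 1/2))\<rceil>)"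
  have nk: "nk \<ge> k" "nk \<ge> 3" unfolding nk_def by auto
  define m where "m = real nk + 1"
  have m4: "m \<ge> 4" using nk unfolding m_def by auto
  have mge: "m \<ge> (2 * \<bar>T\<bar> + 1) powr (1 / (H - 1/2))"
  proof -
    have "(2 * \<bar>T\<bar> + 1) powr (1 / (H - 1/2)) \<le> real (nat \<lceil>(2 * \<bar>T\<bar> + 1) powr (1 / (H - 1/2))\<rceil>)"
      by linarith
    also have "\<dots> \<le> real nk" unfolding nk_def by simp
    finally show ?thesis unfolding m_def by simp
  qed
  have ma: "2 * \<bar>T\<bar> + 1 \<le> m powr (H - 1/2)"
  proof -
    have "2 * \<bar>T\<bar> + 1 = ((2 * \<bar>T\<bar> + 1) powr (1 / (H - 1/2))) powr (H - 1/2)"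
      using H by (simp add: powr_powr)
    also have "\<dots> \<le> m powr (H - 1/2)" using mge H by (intro powr_mono2) auto
    finally show ?thesis .
  qed
  have terms: "\<forall>i\<in>{k..k+nk-2}. m powr (H - 3/2) \<le> (real (k+nk) - real i + 1) powr (H - 3/2)"
  proof
    fix i assume i: "i \<in> {k..k+nk-2}"
    hence "real (k+nk) - real i + 1 \<le> m" "real (k+nk) - real i + 1 > 0" using nk unfolding m_def by auto
    thus "m powr (H - 3/2) \<le> (real (k+nk) - real i + 1) powr (H - 3/2)"
      using H by (intro powr_mono2') auto
  qed
  have card: "card {k..k+nk-2} = nk - 1" using nk by simp
  have "real (nk - 1) * m powr (H - 3/2) \<le> (\<Sum>i\<in>{k..k+nk-2}. (real (k+nk) - real i + 1) powr (H - 3/2))"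
    using sum_bounded_below[of "{k..k+nk-2}" "m powr (H - 3/2)", OF bspec[OF terms]] card by simp
  moreover have "m powr (H - 1/2) / 2 \<le> real (nk - 1) * m powr (H - 3/2)"
  proof -
    have "m powr (H - 1/2) = m powr (H - 3/2) * m"
    proof -
      have "m powr (H - 3/2) * m = m powr (H - 3/2) * m powr 1" using m4 by simp
      also have "\<dots> = m powr ((H - 3/2) + 1)" by (simp only: powr_add)
      finally show ?thesis by simp
    qed
    moreover have "real (nk - 1) = m - 2" using nk unfolding m_def by auto
    moreover have "m powr (H - 3/2) > 0" using m4 by simp
    moreover have "(m / 2) * m powr (H - 3/2) \<le> (m - 2) * m powr (H - 3/2)"
      using m4 by (intro mult_right_mono) auto
    ultimately show ?thesis by (simp add: mult.commute)
  qed
  moreover have "T \<le> m powr (H - 1/2) / 2" using ma by linarith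
  ultimately show ?thesis using nk by (intro exI[of _ nk]) auto
qed

definition jjd :: "real \<Rightarrow> nat \<Rightarrow> nat \<Rightarrow> real" where
  "jjd H n i = integral {real i - 1..real i} (\<lambda>v. kH H (real n) v - kH H (real n - 1) v)"

lemma Y_split:
  assumes k: "2 \<le> k" and x: "length x = k - 1" and N: "N > 0"
  shows "Yn \<sigma> H N (k + nk) (x @ replicate nk c) =
    \<sigma> * real N powr (-H) * ((\<Sum>i=1..k-1. jjd H (k+nk) i * x ! (i - 1)) + c * (\<Sum>i=k..k+nk-1. jjd H (k+nk) i))"
proof -
  let ?x = "x @ replicate nk c"
  let ?q = "\<sigma> * real N powr (-H)"
  have "Yn \<sigma> H N (k + nk) ?x = (\<Sum>i=1..k+nk-1. ?q * jjd H (k+nk) i * ?x ! (i - 1))"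
    unfolding Yn_def using N by (intro sum.cong) (auto simp: Jn_scale jjd_def)
  also have "{1..k+nk-1} = {1..k-1} \<union> {k..k+nk-1}" using k by auto
  also have "(\<Sum>i\<in>{1..k-1} \<union> {k..k+nk-1}. ?q * jjd H (k+nk) i * ?x ! (i - 1)) =
      (\<Sum>i=1..k-1. ?q * jjd H (k+nk) i * ?x ! (i - 1)) + (\<Sum>i=k..k+nk-1. ?q * jjd H (k+nk) i * ?x ! (i - 1))"
    by (intro sum.union_disjoint) auto
  also have "(\<Sum>i=1..k-1. ?q * jjd H (k+nk) i * ?x ! (i - 1)) = (\<Sum>i=1..k-1. ?q * (jjd H (k+nk) i * x ! (i - 1)))"
    using x by (intro sum.cong) (auto simp: nth_append)
  also have "(\<Sum>i=k..k+nk-1. ?q * jjd H (k+nk) i * ?x ! (i - 1)) = (\<Sum>i=k..k+nk-1. ?q * c * jjd H (k+nk) i)"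
    using x k by (intro sum.cong) (auto simp: nth_append)
  finally show ?thesis by (simp add: sum_distrib_left[symmetric] algebra_simps)
qed

lemma part1:
  fixes H \<sigma> :: real and a :: "real \<Rightarrow> real"
  assumes H: "1/2 < H" "H < 1" and sig: "\<sigma> > 0" and ac: "continuous_on {0..1} a"
    and k: "2 \<le> k" and x: "x \<in> pm_seqs (k - 1)"
  shows "\<exists>nk Nk::nat. nk \<ge> 1 \<and> Nk \<ge> k + nk \<and>
              (\<forall>N \<ge> Nk. x @ replicate nk 1 \<in> arb_level \<sigma> H a N (k + nk) \<and>
                         x @ replicate nk (-1) \<in> arb_level \<sigma> H a N (k + nk))"
proof -
  have C: "CH H > 0" by (rule CH_pos[OF H])
  have xl: "length x = k - 1" and xs: "set x \<subseteq> {-1, 1}" using x by (auto simp: pm_seqs_def)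
  obtain M where M: "\<And>y. y \<in> {0..1} \<Longrightarrow> \<bar>a y\<bar> \<le> M"
  proof -
    have "bounded (a ` {0..1})" using ac by (intro compact_imp_bounded compact_continuous_image) auto
    then obtain B where "\<forall>z\<in>a ` {0..1}. norm z \<le> B" by (auto simp: bounded_iff)
    thus ?thesis by (intro that[of B]) auto
  qed
  define Bk where "Bk = (\<Sum>i=1..k-1. integral {real i - 1..real i} (\<lambda>v. 2 * CH H * v powr (1/2 - H)))"
  define Gb where "Gb = 2 * CH H / (H - 1/2)"
  obtain nk where nk: "nk \<ge> k" and S: "(1 + Bk + Gb) / CH H \<le> (\<Sum>i\<in>{k..k+nk-2}. (real (k+nk) - real i + 1) powr (H - 3/2))"
    using tail_big[OF H k] by blast
  define n where "n = k + nk"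
  have n2k: "2 * k \<le> n" using nk unfolding n_def by simp
  have head: "\<bar>\<Sum>i=1..k-1. jjd H n i * x ! (i - 1)\<bar> \<le> Bk"
  proof -
    have "\<bar>\<Sum>i=1..k-1. jjd H n i * x ! (i - 1)\<bar> \<le> (\<Sum>i=1..k-1. \<bar>jjd H n i * x ! (i - 1)\<bar>)"
      by (rule sum_abs)
    also have "\<dots> \<le> Bk" unfolding Bk_def
    proof (rule sum_mono)
      fix i assume i: "i \<in> {1..k-1}"
      have "i - 1 < length x" using xl i by auto
      hence "x ! (i - 1) \<in> set x" by (rule nth_mem)
      hence "x ! (i - 1) \<in> {-1, 1}" using xs by blast
      hence "\<bar>x ! (i - 1)\<bar> = 1" by auto
      moreover have "0 \<le> jjd H n i" unfolding jjd_def using i k n2k by (intro jj_nonneg[OF H]) auto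
      moreover have "jjd H n i \<le> integral {real i - 1..real i} (\<lambda>v. 2 * CH H * v powr (1/2 - H))"
        unfolding jjd_def using i k n2k by (intro jj_head[OF H]) auto
      ultimately show "\<bar>jjd H n i * x ! (i - 1)\<bar> \<le> integral {real i - 1..real i} (\<lambda>v. 2 * CH H * v powr (1/2 - H))"
        by (simp add: abs_mult)
    qed
    finally show ?thesis .
  qed
  have tail: "1 + Bk + Gb \<le> (\<Sum>i=k..n-1. jjd H n i)"
  proof -
    have "1 + Bk + Gb \<le> CH H * (\<Sum>i\<in>{k..k+nk-2}. (real (k+nk) - real i + 1) powr (H - 3/2))"
      using S C by (simp add: field_simps)
    also have "\<dots> = (\<Sum>i\<in>{k..n-2}. CH H * (real n - real i + 1) powr (H - 3/2))"
      unfolding n_def by (simp add: sum_distrib_left)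
    also have "\<dots> \<le> (\<Sum>i\<in>{k..n-2}. jjd H n i)"
      unfolding jjd_def using k n2k by (intro sum_mono jj_tail[OF H]) auto
    also have "\<dots> \<le> (\<Sum>i\<in>{k..n-1}. jjd H n i)"
      unfolding jjd_def using k n2k by (intro sum_mono2 jj_nonneg[OF H]) auto
    finally show ?thesis .
  qed
  have g0: "0 \<le> integral {real n - 1..real n} (\<lambda>v. kH H (real n) v)"
    by (intro integral_nonneg' kH_nonneg[OF H])
  have g1: "integral {real n - 1..real n} (\<lambda>v. kH H (real n) v) \<le> Gb"
    unfolding Gb_def using k n2k by (intro gg_upper[OF H]) auto
  define Nk where "Nk = max n (nat \<lceil>(M / \<sigma> + 1) powr (1 / (1 - H))\<rceil>)"
  show ?thesis
  proof (rule exI[of _ nk], rule exI[of _ Nk], intro conjI allI impI)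
    show "1 \<le> nk" using nk k by simp
  next
    show "k + nk \<le> Nk" unfolding Nk_def n_def by simp
  next
    fix N assume NN: "Nk \<le> N"
    have Nn: "n \<le> N" using NN unfolding Nk_def by simp
    have N0: "N > 0" using Nn k n2k by simp
    have RN: "real N > 0" using N0 by simp
    define q where "q = \<sigma> * real N powr (-H)"
    have q0: "q > 0" using sig RN unfolding q_def by simp
    have Mq: "M / real N \<le> q"
    proof -
      have "(M / \<sigma> + 1) powr (1 / (1 - H)) \<le> real N"
        using NN unfolding Nk_def by linarith
      hence "((M / \<sigma> + 1) powr (1 / (1 - H))) powr (1 - H) \<le> real N powr (1 - H)"
        using H by (intro powr_mono2) auto
      moreover have "M / \<sigma> + 1 > 0"
      proof -
        have "0 \<le> \<bar>a 0\<bar>" by simp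
        also have "\<dots> \<le> M" using M[of 0] by simp
        finally have "0 \<le> M / \<sigma>" using sig by simp
        thus ?thesis by linarith
      qed
      ultimately have A: "M / \<sigma> + 1 \<le> real N powr (1 - H)" using H by (simp add: powr_powr)
      have B: "real N powr (-H) = real N powr (1 - H) / real N"
      proof -
        have "real N powr (1 - H) = real N powr 1 / real N powr H" by (rule powr_diff)
        thus ?thesis using RN by (simp add: powr_minus_divide)
      qed
      have "M \<le> \<sigma> * real N powr (1 - H)" using A sig by (simp add: field_simps)
      hence "M / real N \<le> \<sigma> * real N powr (1 - H) / real N" using RN by (intro divide_right_mono) auto
      thus ?thesis unfolding q_def B by simp
    qed
    have aN: "\<bar>an a N n\<bar> \<le> M / real N"
    proof -
      have "real n / real N \<in> {0..1}" using Nn RN by auto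
      hence "\<bar>a (real n / real N)\<bar> \<le> M" by (rule M)
      thus ?thesis unfolding an_def using RN by (simp add: divide_right_mono)
    qed
    have gq: "gn \<sigma> H N n = q * integral {real n - 1..real n} (\<lambda>v. kH H (real n) v)"
      unfolding q_def using N0 k n2k by (simp add: gn_scale)
    let ?h = "\<Sum>i=1..k-1. jjd H n i * x ! (i - 1)"
    let ?t = "\<Sum>i=k..n-1. jjd H n i"
    have nn: "n - 1 = k + nk - 1" unfolding n_def by simp
    have Y1: "Yn \<sigma> H N n (x @ replicate nk 1) = q * (?h + ?t)"
      unfolding q_def n_def using Y_split[OF k xl N0, of \<sigma> H nk 1] by simp
    have Y2: "Yn \<sigma> H N n (x @ replicate nk (-1)) = q * (?h - ?t)"
      unfolding q_def n_def using Y_split[OF k xl N0, of \<sigma> H nk "-1"] by simp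
    have mem: "x @ replicate nk c \<in> pm_seqs (n - 1)" if "c \<in> {-1, 1}" for c
      using xl xs that k unfolding pm_seqs_def n_def by auto
    have "q * 1 \<le> q * (?h + ?t - integral {real n - 1..real n} (\<lambda>v. kH H (real n) v))"
      using head tail g1 q0 by (intro mult_left_mono) auto
    hence "- an a N n \<le> dn \<sigma> H N n (x @ replicate nk 1)"
      unfolding dn_def Y1 gq using aN Mq by (simp add: algebra_simps)
    thus "x @ replicate nk 1 \<in> arb_level \<sigma> H a N (k + nk)"
      unfolding arb_level_def n_def[symmetric] using mem[of 1] by auto
    have "q * (?h - ?t + integral {real n - 1..real n} (\<lambda>v. kH H (real n) v)) \<le> q * (-1)"
      using head tail g1 q0 by (intro mult_left_mono) auto
    hence "un \<sigma> H N n (x @ replicate nk (-1)) \<le> - an a N n"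
      unfolding un_def Y2 gq using aN Mq by (simp add: algebra_simps)
    thus "x @ replicate nk (-1) \<in> arb_level \<sigma> H a N (k + nk)"
      unfolding arb_level_def n_def[symmetric] using mem[of "-1"] by auto
  qed
qed

lemma finite_pm: "finite (pm_seqs m)"
proof -
  have "pm_seqs m = {xs. set xs \<subseteq> {-1, 1} \<and> length xs = m}" unfolding pm_seqs_def by auto
  thus ?thesis by (simp add: finite_lists_length_eq)
qed

lemma finite_arb: "finite (arb_set \<sigma> H a N)"
  unfolding arb_set_def arb_level_def
  by (intro finite_UN_I) (auto intro: finite_subset[OF _ finite_pm])

lemma distinct_pts:
  assumes "2 \<le> k" "k < k'"
  shows "(replicate (k-2) (1::real) @ [-1]) @ ys \<noteq> (replicate (k'-2) 1 @ [-1]) @ zs"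
proof
  assume eq: "(replicate (k-2) (1::real) @ [-1]) @ ys = (replicate (k'-2) 1 @ [-1]) @ zs"
  have "((replicate (k-2) (1::real) @ [-1]) @ ys) ! (k-2) = -1" by (simp add: nth_append)
  moreover have "((replicate (k'-2) (1::real) @ [-1]) @ zs) ! (k-2) = 1" using assms by (simp add: nth_append)
  ultimately show False using eq by simp
qed

theorem proposition3p2:
  fixes H \<sigma> :: real and a :: "real \<Rightarrow> real"
  assumes "1/2 < H" and "H < 1" and "\<sigma> > 0" and "continuous_on {0..1} a"
  shows "(\<forall>k::nat. \<forall>x. k \<ge> 2 \<longrightarrow> x \<in> pm_seqs (k - 1) \<longrightarrow>
           (\<exists>nk Nk::nat. nk \<ge> 1 \<and> Nk \<ge> k + nk \<and>
              (\<forall>N \<ge> Nk. x @ replicate nk 1 \<in> arb_level \<sigma> H a N (k + nk) \<and>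
                         x @ replicate nk (-1) \<in> arb_level \<sigma> H a N (k + nk))))
       \<and> filterlim (\<lambda>N. card (arb_set \<sigma> H a N)) at_top sequentially"
proof
  show P1: "\<forall>k::nat. \<forall>x. k \<ge> 2 \<longrightarrow> x \<in> pm_seqs (k - 1) \<longrightarrow>
           (\<exists>nk Nk::nat. nk \<ge> 1 \<and> Nk \<ge> k + nk \<and>
              (\<forall>N \<ge> Nk. x @ replicate nk 1 \<in> arb_level \<sigma> H a N (k + nk) \<and>
                         x @ replicate nk (-1) \<in> arb_level \<sigma> H a N (k + nk)))"
    using part1[OF assms] by blast
  define xk :: "nat \<Rightarrow> real list" where "xk k = replicate (k-2) 1 @ [-1]" for k
  have xk: "xk k \<in> pm_seqs (k - 1)" if "2 \<le> k" for k
    using that unfolding xk_def pm_seqs_def by auto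
  have ch: "\<exists>p::nat\<times>nat. 2 \<le> k \<longrightarrow> fst p \<ge> 1 \<and> snd p \<ge> k + fst p \<and>
              (\<forall>N \<ge> snd p. xk k @ replicate (fst p) 1 \<in> arb_level \<sigma> H a N (k + fst p))" for k
  proof (cases "2 \<le> k")
    case True
    from P1[rule_format, OF True xk[OF True]] obtain nk Nk :: nat where
      "nk \<ge> 1 \<and> Nk \<ge> k + nk \<and> (\<forall>N \<ge> Nk. xk k @ replicate nk 1 \<in> arb_level \<sigma> H a N (k + nk) \<and>
                         xk k @ replicate nk (-1) \<in> arb_level \<sigma> H a N (k + nk))" by blast
    thus ?thesis by (intro exI[of _ "(nk, Nk)"]) auto
  qed auto
  have "\<forall>k. \<exists>p::nat\<times>nat. 2 \<le> k \<longrightarrow> fst p \<ge> 1 \<and> snd p \<ge> k + fst p \<and>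
              (\<forall>N \<ge> snd p. xk k @ replicate (fst p) 1 \<in> arb_level \<sigma> H a N (k + fst p))"
    by (rule allI, rule ch)
  from choice[OF this] obtain pf :: "nat \<Rightarrow> nat \<times> nat" where pf: "\<forall>k. 2 \<le> k \<longrightarrow> fst (pf k) \<ge> 1 \<and> snd (pf k) \<ge> k + fst (pf k) \<and>
              (\<forall>N \<ge> snd (pf k). xk k @ replicate (fst (pf k)) 1 \<in> arb_level \<sigma> H a N (k + fst (pf k)))"
    by blast
  define nkf where "nkf k = fst (pf k)" for k
  define Nkf where "Nkf k = snd (pf k)" for k
  have F: "\<And>k. 2 \<le> k \<Longrightarrow> nkf k \<ge> 1 \<and> Nkf k \<ge> k + nkf k \<and>
              (\<forall>N \<ge> Nkf k. xk k @ replicate (nkf k) 1 \<in> arb_level \<sigma> H a N (k + nkf k))"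
    unfolding nkf_def Nkf_def using pf by auto
  define P where "P k = xk k @ replicate (nkf k) 1" for k
  show "filterlim (\<lambda>N. card (arb_set \<sigma> H a N)) at_top sequentially"
    unfolding filterlim_at_top
  proof
    fix Z :: nat
    define B where "B = Max (Nkf ` {2..Z+1})"
    have "eventually (\<lambda>N. B \<le> N) sequentially" by (rule eventually_ge_at_top)
    thus "eventually (\<lambda>N. Z \<le> card (arb_set \<sigma> H a N)) sequentially"
    proof eventually_elim
      case (elim N)
      have sub: "P ` {2..Z+1} \<subseteq> arb_set \<sigma> H a N"
      proof
        fix y assume "y \<in> P ` {2..Z+1}"
        then obtain k where k: "k \<in> {2..Z+1}" and y: "y = P k" by auto
        have "Nkf k \<le> B" unfolding B_def using k by (intro Max_ge) auto
        hence NN: "Nkf k \<le> N" using elim by simp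
        have "y \<in> arb_level \<sigma> H a N (k + nkf k)" using F[of k] k NN unfolding y P_def by auto
        moreover have "k + nkf k \<in> {1..N}" using F[of k] k NN by auto
        ultimately show "y \<in> arb_set \<sigma> H a N" unfolding arb_set_def by blast
      qed
      have inj: "inj_on P {2..Z+1}"
      proof (rule inj_onI)
        fix k k' assume k: "k \<in> {2..Z+1}" "k' \<in> {2..Z+1}" "P k = P k'"
        show "k = k'"
        proof (rule ccontr)
          assume "k \<noteq> k'"
          hence "k < k' \<or> k' < k" by auto
          thus False
          proof
            assume "k < k'"
            hence "P k \<noteq> P k'" unfolding P_def xk_def using k by (intro distinct_pts) auto
            thus False using k by simp
          next
            assume "k' < k"
            hence "P k' \<noteq> P k" unfolding P_def xk_def using k by (intro distinct_pts) auto
            thus False using k by simp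
          qed
        qed
      qed
      have "Z = card (P ` {2..Z+1})" using card_image[OF inj] by simp
      also have "\<dots> \<le> card (arb_set \<sigma> H a N)" by (rule card_mono[OF finite_arb sub])
      finally show ?case .
    qed
  qed
qed

end
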